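(* Let $\varphi:VB_n\to\mathrm{Aut}(F_n)$ be the homomorphism with $\varphi(\sigma_i)=\sigma_i$ and $\varphi(\rho_i)=\alpha_i$ (as automorphisms below), $i=1,\dots,n-1$. Then $\varphi(VP_n)=Cb_n$ and $\varphi(V_i^* )=D_i$ for $i=1,\dots,n-1$.
   Context: The virtual braid group $VB_n$ has generators $\sigma_1,\dots,\sigma_{n-1},\rho_1,\dots,\rho_{n-1}$ and defining relations: $\sigma_i\sigma_{i+1}\sigma_i=\sigma_{i+1}\sigma_i\sigma_{i+1}$, $\sigma_i\sigma_j=\sigma_j\sigma_i$ ($|i-j|\ge2$); $\rho_i\rho_{i+1}\rho_i=\rho_{i+1}\rho_i\rho_{i+1}$, $\rho_i\rho_j=\rho_j\rho_i$ ($|i-j|\ge2$), $\rho_i^2=1$; $\sigma_i\rho_j=\rho_j\sigma_i$ ($|i-j|\ge2$), $\rho_i\rho_{i+1}\sigma_i=\sigma_{i+1}\rho_i\rho_{i+1}$. $VP_n$ is the kernel of $VB_n\to S_n$, $\sigma_i,\rho_i\mapsto(i,i+1)$. Set $\lambda_{i,i+1}=\rho_i\sigma_i^{-1}$, $\lambda_{i+1,i}=\sigma_i^{-1}\rho_i$, and for $1\le i<j-1\le n-1$: $\lambda_{ij}=\rho_{j-1}\cdots\rho_{i+1}\lambda_{i,i+1}\rho_{i+1}\cdots\rho_{j-1}$, $\lambda_{ji}=\rho_{j-1}\cdots\rho_{i+1}\lambda_{i+1,i}\rho_{i+1}\cdots\rho_{j-1}$. $V_i$ is the subgroup generated by $\lambda_{1,i+1},\dots,\lambda_{i,i+1},\lambda_{i+1,1},\dots,\lambda_{i+1,i}$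 and $V_i^*$ its normal closure in $\langle\lambda_{kl}:k,l\le i+1\rangle$. Let $F_n=\langle x_1,\dots,x_n\rangle$ be free. The automorphism $\sigma_i$ sends $x_i\mapsto x_ix_{i+1}x_i^{-1}$, $x_{i+1}\mapsto x_i$, fixing other $x_l$; $\alpha_i$ swaps $x_i,x_{i+1}$ and fixes the others; $\varepsilon_{ij}$ ($i\ne j$) sends $x_i\mapsto x_j^{-1}x_ix_j$ and fixes $x_l$, $l\ne i$. (These assignments define a homomorphism $\varphi$; its image is the welded braid group $WB_n$, the group of conjugating automorphisms.) $Cb_n=\langle\varepsilon_{ij}:1\le i\ne j\le n\rangle$ and $D_i=\langle\varepsilon_{i+1,1},\dots,\varepsilon_{i+1,i},\varepsilon_{1,i+1},\dots,\varepsilon_{i,i+1}\rangle$. *)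

theory Defs
  imports "HOL-Algebra.Bij" "HOL-Algebra.Generated_Groups"
begin

(* a letter (i, False) is x_i, a letter (i, True) is x_i^{-1} *)
type_synonym fletter = "nat \<times> bool"
type_synonym fword = "fletter list"

fun reduce :: "fword \<Rightarrow> fword" where
  "reduce [] = []"
| "reduce (x # w) =
     (case reduce w of
        [] \<Rightarrow> [x]
      | y # w' \<Rightarrow> (if fst x = fst y \<and> snd x \<noteq> snd y then w' else x # y # w'))"

definition reduced :: "fword \<Rightarrow> bool" where
  "reduced w \<longleftrightarrow> (\<forall>k. Suc k < length w \<longrightarrow>
      \<not> (fst (w ! k) = fst (w ! Suc k) \<and> snd (w ! k) \<noteq> snd (w ! Suc k)))"

definition finv :: "fword \<Rightarrow> fword" where
  "finv w = rev (map (\<lambda>(i, b). (i, \<not> b)) w)"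

definition fgen :: "nat \<Rightarrow> fword" where
  "fgen i = [(i, False)]"

definition Fn :: "nat \<Rightarrow> fword set" where
  "Fn n = {w. reduced w \<and> (\<forall>(i, b) \<in> set w. 1 \<le> i \<and> i \<le> n)}"

definition subst :: "(nat \<Rightarrow> fword) \<Rightarrow> fword \<Rightarrow> fword" where
  "subst f w = concat (map (\<lambda>(i, b). if b then finv (f i) else f i) w)"

definition endo :: "nat \<Rightarrow> (nat \<Rightarrow> fword) \<Rightarrow> fword \<Rightarrow> fword" where
  "endo n f = restrict (\<lambda>w. reduce (subst f w)) (Fn n)"

text \<open>Aut(F_n) sits inside the symmetric group on the carrier of F_n.\<close>
abbreviation SymF :: "nat \<Rightarrow> (fword \<Rightarrow> fword) monoid" where
  "SymF n \<equiv> BijGroup (Fn n)"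

definition sigma_map :: "nat \<Rightarrow> nat \<Rightarrow> fword" where
  "sigma_map i l = (if l = i then fgen i @ fgen (Suc i) @ finv (fgen i)
                    else if l = Suc i then fgen i else fgen l)"

definition alpha_map :: "nat \<Rightarrow> nat \<Rightarrow> fword" where
  "alpha_map i l = (if l = i then fgen (Suc i) else if l = Suc i then fgen i else fgen l)"

definition eps_map :: "nat \<Rightarrow> nat \<Rightarrow> nat \<Rightarrow> fword" where
  "eps_map i j l = (if l = i then finv (fgen j) @ fgen i @ fgen j else fgen l)"

definition sigma_aut :: "nat \<Rightarrow> nat \<Rightarrow> fword \<Rightarrow> fword" where
  "sigma_aut n i = endo n (sigma_map i)"

definition alpha_aut :: "nat \<Rightarrow> nat \<Rightarrow> fword \<Rightarrow> fword" where
  "alpha_aut n i = endo n (alpha_map i)"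

definition eps_aut :: "nat \<Rightarrow> nat \<Rightarrow> nat \<Rightarrow> fword \<Rightarrow> fword" where
  "eps_aut n i j = endo n (eps_map i j)"

definition Cb :: "nat \<Rightarrow> (fword \<Rightarrow> fword) set" where
  "Cb n = generate (SymF n) {eps_aut n i j | i j. 1 \<le> i \<and> i \<le> n \<and> 1 \<le> j \<and> j \<le> n \<and> i \<noteq> j}"

definition D :: "nat \<Rightarrow> nat \<Rightarrow> (fword \<Rightarrow> fword) set" where
  "D n i = generate (SymF n)
     ({eps_aut n (Suc i) k | k. 1 \<le> k \<and> k \<le> i} \<union> {eps_aut n k (Suc i) | k. 1 \<le> k \<and> k \<le> i})"

datatype vgen = Sig nat | Rho nat

(* (g, False) is the generator g, (g, True) is g^{-1} *)
type_synonym vword = "(vgen \<times> bool) list"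

definition vinv :: "vword \<Rightarrow> vword" where
  "vinv w = rev (map (\<lambda>(g, b). (g, \<not> b)) w)"

fun gidx :: "vgen \<Rightarrow> nat" where
  "gidx (Sig i) = i" | "gidx (Rho i) = i"

definition vword_ok :: "nat \<Rightarrow> vword \<Rightarrow> bool" where
  "vword_ok n w \<longleftrightarrow> (\<forall>(g, b) \<in> set w. 1 \<le> gidx g \<and> gidx g \<le> n - 1)"

text \<open>The homomorphism VB_n \<rightarrow> S_n, sigma_i, rho_i \<mapsto> (i, i+1).\<close>
definition transp :: "nat \<Rightarrow> nat \<Rightarrow> nat" where
  "transp i k = (if k = i then Suc i else if k = Suc i then i else k)"

definition vperm :: "vword \<Rightarrow> nat \<Rightarrow> nat" where
  "vperm w = foldr (\<lambda>(g, b) p. transp (gidx g) \<circ> p) w id"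

definition VP_words :: "nat \<Rightarrow> vword set" where
  "VP_words n = {w. vword_ok n w \<and> vperm w = id}"

fun phi_gen :: "nat \<Rightarrow> vgen \<Rightarrow> fword \<Rightarrow> fword" where
  "phi_gen n (Sig i) = sigma_aut n i"
| "phi_gen n (Rho i) = alpha_aut n i"

definition phi :: "nat \<Rightarrow> vword \<Rightarrow> fword \<Rightarrow> fword" where
  "phi n w = foldr (\<lambda>(g, b) acc.
       (if b then inv\<^bsub>SymF n\<^esub> (phi_gen n g) else phi_gen n g) \<otimes>\<^bsub>SymF n\<^esub> acc)
     w \<one>\<^bsub>SymF n\<^esub>"

definition rhos :: "nat \<Rightarrow> nat \<Rightarrow> vword" where
  "rhos k l = map (\<lambda>m. (Rho m, False)) [Suc k..<l]"

definition lam :: "nat \<Rightarrow> nat \<Rightarrow> vword" where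
  "lam i j = (if i < j then rev (rhos i j) @ [(Rho i, False), (Sig i, True)] @ rhos i j
              else rev (rhos j i) @ [(Sig j, True), (Rho j, False)] @ rhos j i)"

inductive_set H_words :: "nat \<Rightarrow> vword set" for i :: nat where
  H_nil: "[] \<in> H_words i"
| H_gen: "\<lbrakk>1 \<le> k; k \<le> Suc i; 1 \<le> l; l \<le> Suc i; k \<noteq> l; u \<in> H_words i\<rbrakk>
          \<Longrightarrow> lam k l @ u \<in> H_words i"
| H_gen_inv: "\<lbrakk>1 \<le> k; k \<le> Suc i; 1 \<le> l; l \<le> Suc i; k \<noteq> l; u \<in> H_words i\<rbrakk>
          \<Longrightarrow> vinv (lam k l) @ u \<in> H_words i"

definition V_gens :: "nat \<Rightarrow> vword set" where
  "V_gens i = {lam k (Suc i) | k. 1 \<le> k \<and> k \<le> i} \<union> {lam (Suc i) k | k. 1 \<le> k \<and> k \<le> i}"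

text \<open>Words representing elements of V_i^*, the normal closure of V_i in H_i:
  products of conjugates h v^{\<plusminus>1} h^{-1}, h \<in> H_i, v a generator of V_i.\<close>
inductive_set Vstar_words :: "nat \<Rightarrow> vword set" for i :: nat where
  Vs_nil: "[] \<in> Vstar_words i"
| Vs_conj: "\<lbrakk>v \<in> V_gens i; h \<in> H_words i; u \<in> Vstar_words i\<rbrakk>
          \<Longrightarrow> (h @ v @ vinv h) @ u \<in> Vstar_words i"
| Vs_conj_inv: "\<lbrakk>v \<in> V_gens i; h \<in> H_words i; u \<in> Vstar_words i\<rbrakk>
          \<Longrightarrow> (h @ vinv v @ vinv h) @ u \<in> Vstar_words i"

end

theory Submission
  imports Defs
begin


definition cancels :: "fletter \<Rightarrow> fletter \<Rightarrow> bool" where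
  "cancels x y \<longleftrightarrow> fst x = fst y \<and> snd x \<noteq> snd y"

fun step :: "fletter \<Rightarrow> fword \<Rightarrow> fword" where
  "step x [] = [x]"
| "step x (y # w) = (if fst x = fst y \<and> snd x \<noteq> snd y then w else x # y # w)"

lemma reduce_Cons: "reduce (x # w) = step x (reduce w)"
  by (simp split: list.split)

declare reduce.simps(2)[simp del]

lemma reduce_single[simp]: "reduce [x] = [x]"
  by (simp add: reduce_Cons)

lemma reduce_append: "reduce (u @ w) = foldr step u (reduce w)"
  by (induct u) (simp_all add: reduce_Cons)

lemma reduced_Nil[simp]: "reduced []" and reduced_single[simp]: "reduced [x]"
  by (auto simp: reduced_def)

lemma reduced_Cons_Cons[simp]:
  "reduced (x # y # w) \<longleftrightarrow> \<not> (fst x = fst y \<and> snd x \<noteq> snd y) \<and> reduced (y # w)"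
proof
  assume r: "reduced (x # y # w)"
  have "\<not> (fst x = fst y \<and> snd x \<noteq> snd y)" using r[unfolded reduced_def, rule_format, of 0] by simp
  moreover have "reduced (y # w)" unfolding reduced_def
  proof (intro allI impI)
    fix k assume "Suc k < length (y # w)"
    then show "\<not> (fst ((y # w) ! k) = fst ((y # w) ! Suc k) \<and> snd ((y # w) ! k) \<noteq> snd ((y # w) ! Suc k))"
      using r[unfolded reduced_def, rule_format, of "Suc k"] by simp
  qed
  ultimately show "\<not> (fst x = fst y \<and> snd x \<noteq> snd y) \<and> reduced (y # w)" by blast
next
  assume a: "\<not> (fst x = fst y \<and> snd x \<noteq> snd y) \<and> reduced (y # w)"
  show "reduced (x # y # w)" unfolding reduced_def
  proof (intro allI impI)
    fix k assume k: "Suc k < length (x # y # w)"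
    show "\<not> (fst ((x # y # w) ! k) = fst ((x # y # w) ! Suc k) \<and> snd ((x # y # w) ! k) \<noteq> snd ((x # y # w) ! Suc k))"
    proof (cases k)
      case 0 then show ?thesis using a by simp
    next
      case (Suc k') then show ?thesis using a[THEN conjunct2, unfolded reduced_def, rule_format, of k'] k by simp
    qed
  qed
qed

lemma reduced_tl: "reduced (x # w) \<Longrightarrow> reduced w"
  by (cases w) auto

lemma reduced_step: "reduced w \<Longrightarrow> reduced (step x w)"
  by (cases w) (auto dest: reduced_tl)

lemma reduced_reduce[simp]: "reduced (reduce w)"
  by (induct w) (simp_all add: reduce_Cons reduced_step)

lemma reduce_reduced: "reduced w \<Longrightarrow> reduce w = w"
proof (induct w)
  case (Cons x w)
  then have "reduce w = w" by (auto dest: reduced_tl)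
  then show ?case using Cons.prems by (cases w) (auto simp: reduce_Cons)
qed simp

lemma reduce_reduce[simp]: "reduce (reduce w) = reduce w"
  by (simp add: reduce_reduced)

lemma step_step: "reduced s \<Longrightarrow> fst x = fst y \<Longrightarrow> snd x \<noteq> snd y \<Longrightarrow> step x (step y s) = s"
proof (cases s)
  case (Cons z s')
  assume r: "reduced s" and c: "fst x = fst y" "snd x \<noteq> snd y"
  show ?thesis
  proof (cases "fst y = fst z \<and> snd y \<noteq> snd z")
    case True
    then have "z = x" using c by (cases x, cases z) auto
    with True Cons r c show ?thesis by (cases s') auto
  qed (use Cons c in auto)
qed auto

lemma reduced_foldr: "reduced r \<Longrightarrow> reduced (foldr step v r)"
  by (induct v) (auto simp: reduced_step)

lemma foldr_step_step: "reduced r \<Longrightarrow> foldr step (step x v) r = step x (foldr step v r)"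
proof (cases v)
  case (Cons y v')
  assume r: "reduced r"
  show ?thesis
  proof (cases "fst x = fst y \<and> snd x \<noteq> snd y")
    case True
    then have "step x (step y (foldr step v' r)) = foldr step v' r"
      by (intro step_step reduced_foldr r) auto
    with True Cons show ?thesis by simp
  qed (use Cons in auto)
qed simp

lemma foldr_reduce: "reduced r \<Longrightarrow> foldr step (reduce u) r = foldr step u r"
  by (induct u) (simp_all add: reduce_Cons foldr_step_step)

lemma reduce_append_left[simp]: "reduce (reduce u @ w) = reduce (u @ w)"
  by (simp add: reduce_append foldr_reduce)

lemma reduce_append_right[simp]: "reduce (u @ reduce w) = reduce (u @ w)"
  by (simp add: reduce_append)

lemma reduce_mid: "reduce (a @ reduce b @ c) = reduce (a @ b @ c)"
  by (metis append_assoc reduce_append_left reduce_append_right)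

lemma finv_Nil[simp]: "finv [] = []"
  and finv_Cons[simp]: "finv (x # w) = finv w @ [(fst x, \<not> snd x)]"
  and finv_append[simp]: "finv (u @ v) = finv v @ finv u"
  by (auto simp: finv_def split: prod.split)

lemma finv_finv[simp]: "finv (finv w) = w"
  by (induct w) auto

lemma reduce_inv_right[simp]: "reduce (w @ finv w) = []"
proof (induct w)
  case (Cons x w)
  have "reduce ((x # w) @ finv (x # w)) = reduce (x # (w @ finv w) @ [(fst x, \<not> snd x)])" by simp
  also have "\<dots> = step x (reduce (reduce (w @ finv w) @ [(fst x, \<not> snd x)]))"
    by (simp only: reduce_Cons reduce_append_left)
  also have "\<dots> = []" using Cons by (simp add: reduce_Cons)
  finally show ?case .
qed simp

lemma reduce_inv_left[simp]: "reduce (finv w @ w) = []"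
  using reduce_inv_right[of "finv w"] by simp

lemma reduce_inv_right'[simp]: "reduce (w @ finv w @ u) = reduce u"
  by (metis append.left_neutral append_assoc reduce_append_left reduce_inv_right)

lemma reduce_inv_left'[simp]: "reduce (finv w @ w @ u) = reduce u"
  by (metis append.left_neutral append_assoc reduce_append_left reduce_inv_left)

lemma set_step: "set (step x w) \<subseteq> insert x (set w)"
  by (cases w) auto

lemma set_reduce: "set (reduce w) \<subseteq> set w"
  by (induct w) (use set_step in \<open>fastforce simp: reduce_Cons\<close>)+

lemma reduce_finv_cong: assumes "reduce u = reduce v" shows "reduce (finv u) = reduce (finv v)"
proof -
  have "reduce (finv u) = reduce (finv u @ reduce (v @ finv v))" by (simp only: reduce_inv_right append_Nil2)
  also have "\<dots> = reduce (finv u @ reduce v @ finv v)" by (simp only: reduce_mid reduce_append_right)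
  also have "\<dots> = reduce (finv u @ reduce u @ finv v)" using assms by simp
  also have "\<dots> = reduce (finv u @ u @ finv v)" by (simp only: reduce_mid)
  also have "\<dots> = reduce (finv v)" by simp
  finally show ?thesis .
qed



definition fl :: "(nat \<Rightarrow> fword) \<Rightarrow> fletter \<Rightarrow> fword" where
  "fl f x = (if snd x then finv (f (fst x)) else f (fst x))"

lemma subst_Nil[simp]: "subst f [] = []"
  and subst_Cons[simp]: "subst f (x # w) = fl f x @ subst f w"
  and subst_append[simp]: "subst f (u @ v) = subst f u @ subst f v"
  by (auto simp: subst_def fl_def split: prod.split)

lemma fl_neg: "fl f (fst x, \<not> snd x) = finv (fl f x)"
  by (simp add: fl_def)

lemma subst_finv[simp]: "subst f (finv w) = finv (subst f w)"
  by (induct w) (simp_all add: fl_neg)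

lemma reduce_subst_step: "reduce (subst f (step x v)) = reduce (subst f (x # v))"
proof (cases v)
  case (Cons y v')
  show ?thesis
  proof (cases "fst x = fst y \<and> snd x \<noteq> snd y")
    case True
    then have "y = (fst x, \<not> snd x)" by (cases x, cases y) auto
    then have "subst f (x # v) = fl f x @ finv (fl f x) @ subst f v'" using Cons by (simp add: fl_neg)
    then show ?thesis using True Cons by simp
  qed (use Cons in auto)
qed simp

lemma reduce_subst_reduce[simp]: "reduce (subst f (reduce w)) = reduce (subst f w)"
proof (induct w)
  case (Cons x w)
  have "reduce (subst f (reduce (x # w))) = reduce (subst f (x # reduce w))"
    by (simp add: reduce_Cons reduce_subst_step)
  also have "\<dots> = reduce (fl f x @ reduce (subst f (reduce w)))" by simp
  also have "\<dots> = reduce (fl f x @ reduce (subst f w))" using Cons by simp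
  also have "\<dots> = reduce (subst f (x # w))" by simp
  finally show ?case .
qed simp

lemma subst_subst: "subst f (subst g w) = subst (\<lambda>l. subst f (g l)) w"
  by (induct w) (auto simp: fl_def)

lemma fl_fgen[simp]: "fl fgen x = [x]"
  by (cases x) (auto simp: fl_def fgen_def)

lemma subst_fgen[simp]: "subst fgen w = w"
  by (induct w) simp_all

lemma subst_fgen_single[simp]: "subst f (fgen i) = f i"
  by (simp add: fgen_def fl_def)

lemma reduce_subst_cong:
  assumes "\<And>x. x \<in> set w \<Longrightarrow> reduce (f (fst x)) = reduce (g (fst x))"
  shows "reduce (subst f w) = reduce (subst g w)"
  using assms
proof (induct w)
  case (Cons x w)
  have fx: "reduce (fl f x) = reduce (fl g x)"
    using Cons.prems[of x] by (auto simp: fl_def intro: reduce_finv_cong)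
  have "reduce (subst f (x # w)) = reduce (reduce (fl f x) @ reduce (subst f w))" by simp
  also have "\<dots> = reduce (reduce (fl g x) @ reduce (subst g w))" using fx Cons by simp
  also have "\<dots> = reduce (subst g (x # w))" by simp
  finally show ?case .
qed simp

definition inr :: "nat \<Rightarrow> fword \<Rightarrow> bool" where
  "inr n w \<longleftrightarrow> (\<forall>x \<in> set w. 1 \<le> fst x \<and> fst x \<le> n)"

lemma Fn_iff: "w \<in> Fn n \<longleftrightarrow> reduced w \<and> inr n w"
  by (auto simp: Fn_def inr_def)

definition good :: "nat \<Rightarrow> (nat \<Rightarrow> fword) \<Rightarrow> bool" where
  "good n f \<longleftrightarrow> (\<forall>l. 1 \<le> l \<and> l \<le> n \<longrightarrow> inr n (f l))"

lemma inr_simps[simp]: "inr n []" "inr n (x # w) \<longleftrightarrow> 1 \<le> fst x \<and> fst x \<le> n \<and> inr n w"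
  "inr n (u @ v) \<longleftrightarrow> inr n u \<and> inr n v"
  by (auto simp: inr_def)

lemma inr_finv[simp]: "inr n (finv w) \<longleftrightarrow> inr n w"
  by (induct w) auto

lemma inr_fgen[simp]: "inr n (fgen i) \<longleftrightarrow> 1 \<le> i \<and> i \<le> n"
  by (simp add: fgen_def)

lemma inr_reduce: "inr n w \<Longrightarrow> inr n (reduce w)"
  using set_reduce by (fastforce simp: inr_def)

lemma inr_subst: "good n f \<Longrightarrow> inr n w \<Longrightarrow> inr n (subst f w)"
  by (induct w) (auto simp: good_def fl_def)

lemma reduce_in_Fn: "inr n w \<Longrightarrow> reduce w \<in> Fn n"
  by (simp add: Fn_iff inr_reduce)

lemma Fn_reduce: "w \<in> Fn n \<Longrightarrow> reduce w = w"
  by (simp add: Fn_iff reduce_reduced)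

lemma endo_in: "good n f \<Longrightarrow> w \<in> Fn n \<Longrightarrow> endo n f w \<in> Fn n"
  by (auto simp: endo_def Fn_iff intro!: inr_reduce inr_subst)

definition mcomp :: "(nat \<Rightarrow> fword) \<Rightarrow> (nat \<Rightarrow> fword) \<Rightarrow> nat \<Rightarrow> fword" where
  "mcomp f g = (\<lambda>l. subst f (g l))"

lemma good_mcomp: "good n f \<Longrightarrow> good n g \<Longrightarrow> good n (mcomp f g)"
  by (simp add: good_def mcomp_def inr_subst)

lemma endo_comp: assumes "good n g"
  shows "compose (Fn n) (endo n f) (endo n g) = endo n (mcomp f g)"
proof
  fix w show "compose (Fn n) (endo n f) (endo n g) w = endo n (mcomp f g) w"
  proof (cases "w \<in> Fn n")
    case True
    have "endo n f (endo n g w) = reduce (subst f (reduce (subst g w)))"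
      using endo_in[OF assms True] True by (simp add: endo_def)
    also have "\<dots> = endo n (mcomp f g) w" using True by (simp add: endo_def subst_subst mcomp_def)
    finally show ?thesis using True by (simp add: compose_def)
  qed (simp add: compose_def endo_def)
qed

lemma endo_cong: assumes "\<And>l. 1 \<le> l \<Longrightarrow> l \<le> n \<Longrightarrow> reduce (f l) = reduce (g l)"
  shows "endo n f = endo n g"
proof
  fix w show "endo n f w = endo n g w"
  proof (cases "w \<in> Fn n")
    case True
    then have "inr n w" by (simp add: Fn_iff)
    then have "reduce (subst f w) = reduce (subst g w)"
      by (intro reduce_subst_cong assms) (auto simp: inr_def)
    then show ?thesis using True by (simp add: endo_def)
  qed (simp add: endo_def)
qed

lemma endo_fgen: "endo n fgen = (\<lambda>x\<in>Fn n. x)"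
  by (auto simp: endo_def Fn_reduce)

lemma endo_idI: assumes "\<And>l. 1 \<le> l \<Longrightarrow> l \<le> n \<Longrightarrow> reduce (f l) = fgen l"
  shows "endo n f = (\<lambda>x\<in>Fn n. x)"
proof -
  have "endo n f = endo n fgen" by (rule endo_cong) (simp add: assms fgen_def)
  then show ?thesis by (simp add: endo_fgen)
qed

definition isaut :: "nat \<Rightarrow> (nat \<Rightarrow> fword) \<Rightarrow> (nat \<Rightarrow> fword) \<Rightarrow> bool" where
  "isaut n f g \<longleftrightarrow> good n f \<and> good n g \<and>
     (\<forall>l. 1 \<le> l \<and> l \<le> n \<longrightarrow> reduce (subst f (g l)) = fgen l \<and> reduce (subst g (f l)) = fgen l)"

lemma isaut_comp1: "isaut n f g \<Longrightarrow> compose (Fn n) (endo n f) (endo n g) = (\<lambda>x\<in>Fn n. x)"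
  by (auto simp: isaut_def endo_comp mcomp_def intro!: endo_idI)

lemma isaut_sym: "isaut n f g \<Longrightarrow> isaut n g f"
  by (auto simp: isaut_def)

lemma isaut_Bij: assumes "isaut n f g" shows "endo n f \<in> Bij (Fn n)"
proof -
  have gf: "good n f" "good n g" using assms by (auto simp: isaut_def)
  have c1: "endo n f (endo n g w) = w" if "w \<in> Fn n" for w
    using fun_cong[OF isaut_comp1[OF assms], of w] that by (simp add: compose_def)
  have c2: "endo n g (endo n f w) = w" if "w \<in> Fn n" for w
    using fun_cong[OF isaut_comp1[OF isaut_sym[OF assms]], of w] that by (simp add: compose_def)
  have "bij_betw (endo n f) (Fn n) (Fn n)"
    by (rule bij_betw_byWitness[where f'="endo n g"]) (use c1 c2 endo_in gf in auto)
  moreover have "endo n f \<in> extensional (Fn n)" by (simp add: endo_def)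
  ultimately show ?thesis by (simp add: Bij_def)
qed

interpretation SG: group "SymF n" for n by (rule group_BijGroup)

lemma SymF_mult: "x \<in> Bij (Fn n) \<Longrightarrow> y \<in> Bij (Fn n) \<Longrightarrow> x \<otimes>\<^bsub>SymF n\<^esub> y = compose (Fn n) x y"
  by (simp add: BijGroup_def)

lemma SymF_carrier: "carrier (SymF n) = Bij (Fn n)"
  and SymF_one: "\<one>\<^bsub>SymF n\<^esub> = (\<lambda>x\<in>Fn n. x)"
  by (simp_all add: BijGroup_def)

lemma isaut_carrier: "isaut n f g \<Longrightarrow> endo n f \<in> carrier (SymF n)"
  by (simp add: SymF_carrier isaut_Bij)

lemma isaut_inv: assumes "isaut n f g" shows "inv\<^bsub>SymF n\<^esub> (endo n f) = endo n g"
proof (rule SG.inv_equality)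
  have s: "isaut n g f" using assms by (rule isaut_sym)
  show "endo n g \<in> carrier (SymF n)" using isaut_carrier[OF s] .
  show "endo n f \<in> carrier (SymF n)" using isaut_carrier[OF assms] .
  show "endo n g \<otimes>\<^bsub>SymF n\<^esub> endo n f = \<one>\<^bsub>SymF n\<^esub>"
    using isaut_Bij[OF s] isaut_Bij[OF assms] isaut_comp1[OF s] by (simp add: SymF_mult SymF_one)
qed

lemma endo_mult: "good n g \<Longrightarrow> endo n f \<in> carrier (SymF n) \<Longrightarrow> endo n g \<in> carrier (SymF n) \<Longrightarrow>
   endo n f \<otimes>\<^bsub>SymF n\<^esub> endo n g = endo n (mcomp f g)"
  by (simp add: SymF_mult endo_comp SymF_carrier)

lemma endo_one: "endo n fgen = \<one>\<^bsub>SymF n\<^esub>"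
  by (simp add: SymF_one endo_fgen)



definition epsinv_map :: "nat \<Rightarrow> nat \<Rightarrow> nat \<Rightarrow> fword" where
  "epsinv_map i j l = (if l = i then fgen j @ fgen i @ finv (fgen j) else fgen l)"

abbreviation Ei :: "nat \<Rightarrow> nat \<Rightarrow> nat \<Rightarrow> fword \<Rightarrow> fword" where
  "Ei n i j \<equiv> endo n (epsinv_map i j)"

definition rng :: "nat \<Rightarrow> nat \<Rightarrow> bool" where "rng n i \<longleftrightarrow> 1 \<le> i \<and> i \<le> n"

lemma good_eps: "rng n i \<Longrightarrow> rng n j \<Longrightarrow> good n (eps_map i j)"
  by (auto simp: good_def eps_map_def rng_def)

lemma good_epsinv: "rng n i \<Longrightarrow> rng n j \<Longrightarrow> good n (epsinv_map i j)"
  by (auto simp: good_def epsinv_map_def rng_def)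

lemma good_alpha: "1 \<le> t \<Longrightarrow> Suc t \<le> n \<Longrightarrow> good n (alpha_map t)"
  by (auto simp: good_def alpha_map_def)

lemma isaut_eps: assumes "rng n i" "rng n j" "i \<noteq> j"
  shows "isaut n (eps_map i j) (epsinv_map i j)"
  using assms good_eps[OF assms(1,2)] good_epsinv[OF assms(1,2)]
  by (auto simp: isaut_def eps_map_def epsinv_map_def fgen_def fl_def reduce_Cons)

lemma isaut_alpha: assumes "1 \<le> t" "Suc t \<le> n"
  shows "isaut n (alpha_map t) (alpha_map t)"
  using assms good_alpha[OF assms]
  by (auto simp: isaut_def alpha_map_def fgen_def fl_def)

lemma eps_carrier: "rng n i \<Longrightarrow> rng n j \<Longrightarrow> i \<noteq> j \<Longrightarrow> eps_aut n i j \<in> carrier (SymF n)"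
  unfolding eps_aut_def by (rule isaut_carrier[OF isaut_eps])

lemma epsinv_carrier: "rng n i \<Longrightarrow> rng n j \<Longrightarrow> i \<noteq> j \<Longrightarrow> Ei n i j \<in> carrier (SymF n)"
  by (rule isaut_carrier[OF isaut_sym[OF isaut_eps]])

lemma eps_inv: "rng n i \<Longrightarrow> rng n j \<Longrightarrow> i \<noteq> j \<Longrightarrow> inv\<^bsub>SymF n\<^esub> (eps_aut n i j) = Ei n i j"
  unfolding eps_aut_def by (rule isaut_inv[OF isaut_eps])

lemma epsinv_inv: "rng n i \<Longrightarrow> rng n j \<Longrightarrow> i \<noteq> j \<Longrightarrow> inv\<^bsub>SymF n\<^esub> (Ei n i j) = eps_aut n i j"
  unfolding eps_aut_def by (rule isaut_inv[OF isaut_sym[OF isaut_eps]])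

lemma alpha_carrier: "1 \<le> t \<Longrightarrow> Suc t \<le> n \<Longrightarrow> alpha_aut n t \<in> carrier (SymF n)"
  unfolding alpha_aut_def by (rule isaut_carrier[OF isaut_alpha])

lemma alpha_inv: "1 \<le> t \<Longrightarrow> Suc t \<le> n \<Longrightarrow> inv\<^bsub>SymF n\<^esub> (alpha_aut n t) = alpha_aut n t"
  unfolding alpha_aut_def by (rule isaut_inv[OF isaut_alpha])

lemma alpha_alpha: "1 \<le> t \<Longrightarrow> Suc t \<le> n \<Longrightarrow> alpha_aut n t \<otimes>\<^bsub>SymF n\<^esub> alpha_aut n t = \<one>\<^bsub>SymF n\<^esub>"
  by (metis SG.r_inv alpha_carrier alpha_inv)

lemma sigma_decomp: assumes "1 \<le> t" "Suc t \<le> n"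
  shows "sigma_aut n t = Ei n (Suc t) t \<otimes>\<^bsub>SymF n\<^esub> alpha_aut n t"
proof -
  have r: "rng n t" "rng n (Suc t)" using assms by (auto simp: rng_def)
  have "Ei n (Suc t) t \<otimes>\<^bsub>SymF n\<^esub> alpha_aut n t = endo n (mcomp (epsinv_map (Suc t) t) (alpha_map t))"
    unfolding alpha_aut_def
    by (rule endo_mult[OF good_alpha[OF assms] epsinv_carrier[OF r(2,1)] alpha_carrier[OF assms, unfolded alpha_aut_def]]) simp
  also have "\<dots> = sigma_aut n t" unfolding sigma_aut_def
    by (rule endo_cong) (auto simp: mcomp_def alpha_map_def sigma_map_def epsinv_map_def fgen_def fl_def)
  finally show ?thesis by simp
qed

lemma sigma_carrier: "1 \<le> t \<Longrightarrow> Suc t \<le> n \<Longrightarrow> sigma_aut n t \<in> carrier (SymF n)"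
  by (simp add: sigma_decomp alpha_carrier epsinv_carrier rng_def)

lemma transp_rng: "1 \<le> t \<Longrightarrow> Suc t \<le> n \<Longrightarrow> rng n i \<Longrightarrow> rng n (transp t i)"
  by (auto simp: Defs.transp_def rng_def)

lemma tr_tr[simp]: "transp t (transp t i) = i"
  by (auto simp: Defs.transp_def)

lemma transp_inj: "transp t a = transp t b \<longleftrightarrow> a = b"
  by (metis tr_tr)

lemma alpha_map_tr: "alpha_map t l = fgen (transp t l)"
  by (simp add: alpha_map_def Defs.transp_def)

lemma tr_eq: "transp t l = a \<longleftrightarrow> l = transp t a"
  by (metis tr_tr)

lemma alpha_conj_eps: assumes t: "1 \<le> t" "Suc t \<le> n" and ab: "rng n a" "rng n b" "a \<noteq> b"
  shows "alpha_aut n t \<otimes>\<^bsub>SymF n\<^esub> eps_aut n a b \<otimes>\<^bsub>SymF n\<^esub> alpha_aut n t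
       = eps_aut n (transp t a) (transp t b)"
proof -
  have "alpha_aut n t \<otimes>\<^bsub>SymF n\<^esub> eps_aut n a b = endo n (mcomp (alpha_map t) (eps_map a b))"
    unfolding alpha_aut_def eps_aut_def
    by (rule endo_mult[OF good_eps[OF ab(1,2)]])
       (use alpha_carrier[OF t] eps_carrier[OF ab] in \<open>simp_all add: alpha_aut_def eps_aut_def\<close>)
  moreover have "endo n (mcomp (alpha_map t) (eps_map a b)) \<in> carrier (SymF n)"
    using calculation alpha_carrier[OF t] eps_carrier[OF ab] by (metis SG.m_closed)
  ultimately have "alpha_aut n t \<otimes>\<^bsub>SymF n\<^esub> eps_aut n a b \<otimes>\<^bsub>SymF n\<^esub> alpha_aut n t
     = endo n (mcomp (mcomp (alpha_map t) (eps_map a b)) (alpha_map t))"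
    using alpha_carrier[OF t] by (simp add: alpha_aut_def endo_mult good_alpha[OF t])
  also have "\<dots> = eps_aut n (transp t a) (transp t b)" unfolding eps_aut_def
  proof (rule endo_cong)
    fix l
    show "reduce (mcomp (mcomp (alpha_map t) (eps_map a b)) (alpha_map t) l) = reduce (eps_map (transp t a) (transp t b) l)"
    proof (cases "l = transp t a")
      case True
      then show ?thesis by (simp add: mcomp_def alpha_map_tr eps_map_def fl_def)
    next
      case False
      then have "transp t l \<noteq> a" by (metis tr_tr)
      with False show ?thesis by (simp add: mcomp_def alpha_map_tr eps_map_def fl_def)
    qed
  qed
  finally show ?thesis .
qed



lemma (in group) conj_generate:
  assumes a: "a \<in> carrier G" and S: "S \<subseteq> carrier G"
    and gen: "\<And>s. s \<in> S \<Longrightarrow> a \<otimes> s \<otimes> inv a \<in> generate G S"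
    and x: "x \<in> generate G S"
  shows "a \<otimes> x \<otimes> inv a \<in> generate G S"
  using x
proof (induct x rule: generate.induct)
  case one
  then show ?case using a by (simp add: generate.one)
next
  case (incl h) then show ?case by (rule gen)
next
  case (inv h)
  have h: "h \<in> carrier G" using inv S by auto
  have "a \<otimes> inv h \<otimes> inv a = inv (a \<otimes> h \<otimes> inv a)"
    using a h by (simp add: inv_mult_group m_assoc)
  then show ?case using gen[OF inv] subgroup.m_inv_closed[OF generate_is_subgroup[OF S]] by simp
next
  case (eng h1 h2)
  have c: "h1 \<in> carrier G" "h2 \<in> carrier G" using eng generate_in_carrier[OF S] by auto
  have "a \<otimes> (h1 \<otimes> h2) \<otimes> inv a = (a \<otimes> h1 \<otimes> inv a) \<otimes> (a \<otimes> h2 \<otimes> inv a)"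
    using a c by (simp add: m_assoc flip: m_assoc[of "inv a" a] )
  then show ?case using eng subgroup.m_closed[OF generate_is_subgroup[OF S]] by simp
qed

definition gg :: "nat \<Rightarrow> vgen \<times> bool \<Rightarrow> fword \<Rightarrow> fword" where
  "gg n x = (if snd x then inv\<^bsub>SymF n\<^esub> (phi_gen n (fst x)) else phi_gen n (fst x))"

lemma phi_Nil[simp]: "phi n [] = \<one>\<^bsub>SymF n\<^esub>"
  and phi_Cons: "phi n (x # w) = gg n x \<otimes>\<^bsub>SymF n\<^esub> phi n w"
  by (auto simp: phi_def gg_def split: prod.split)

definition okg :: "nat \<Rightarrow> vgen \<Rightarrow> bool" where "okg n g \<longleftrightarrow> 1 \<le> gidx g \<and> gidx g \<le> n - 1"

lemma ok_Nil[simp]: "vword_ok n []"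
  and ok_Cons[simp]: "vword_ok n (x # w) \<longleftrightarrow> okg n (fst x) \<and> vword_ok n w"
  and ok_append[simp]: "vword_ok n (u @ v) \<longleftrightarrow> vword_ok n u \<and> vword_ok n v"
  by (auto simp: vword_ok_def okg_def split: prod.split)

lemma ok_vinv[simp]: "vword_ok n (vinv w) \<longleftrightarrow> vword_ok n w"
  by (auto simp: vword_ok_def vinv_def)

lemma vinv_Nil[simp]: "vinv [] = []"
  and vinv_Cons[simp]: "vinv (x # w) = vinv w @ [(fst x, \<not> snd x)]"
  and vinv_append[simp]: "vinv (u @ v) = vinv v @ vinv u"
  by (auto simp: vinv_def split: prod.split)

lemma okgD: "okg n g \<Longrightarrow> 1 \<le> gidx g \<and> Suc (gidx g) \<le> n"
  by (auto simp: okg_def)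

lemma phi_gen_carrier: "okg n g \<Longrightarrow> phi_gen n g \<in> carrier (SymF n)"
  by (cases g) (auto dest!: okgD simp: sigma_carrier alpha_carrier)

lemma gg_carrier: "okg n (fst x) \<Longrightarrow> gg n x \<in> carrier (SymF n)"
  by (auto simp: gg_def phi_gen_carrier)

lemma phi_carrier: "vword_ok n w \<Longrightarrow> phi n w \<in> carrier (SymF n)"
  by (induct w) (auto simp: phi_Cons gg_carrier)

lemma phi_append: "vword_ok n u \<Longrightarrow> vword_ok n v \<Longrightarrow> phi n (u @ v) = phi n u \<otimes>\<^bsub>SymF n\<^esub> phi n v"
  by (induct u) (auto simp: phi_Cons gg_carrier phi_carrier SG.m_assoc phi_carrier)

lemma phi_single: "okg n (fst x) \<Longrightarrow> phi n [x] = gg n x"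
  by (simp add: phi_Cons gg_carrier)

lemma phi_vinv: "vword_ok n w \<Longrightarrow> phi n (vinv w) = inv\<^bsub>SymF n\<^esub> (phi n w)"
proof (induct w)
  case (Cons x w)
  have ok: "okg n (fst x)" "vword_ok n w" using Cons by auto
  have g: "gg n (fst x, \<not> snd x) = inv\<^bsub>SymF n\<^esub> (gg n x)"
    using phi_gen_carrier[OF ok(1)] by (auto simp: gg_def)
  have "phi n (vinv (x # w)) = phi n (vinv w) \<otimes>\<^bsub>SymF n\<^esub> phi n [(fst x, \<not> snd x)]"
    using ok by (simp add: phi_append)
  also have "\<dots> = inv\<^bsub>SymF n\<^esub> (phi n w) \<otimes>\<^bsub>SymF n\<^esub> inv\<^bsub>SymF n\<^esub> (gg n x)"
    using Cons ok by (simp add: phi_single g)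
  also have "\<dots> = inv\<^bsub>SymF n\<^esub> (phi n (x # w))"
    using ok by (simp add: phi_Cons SG.inv_mult_group gg_carrier phi_carrier)
  finally show ?case .
qed simp

lemma vperm_Nil[simp]: "vperm [] = id"
  and vperm_Cons: "vperm (x # w) = transp (gidx (fst x)) \<circ> vperm w"
  by (auto simp: vperm_def split: prod.split)

lemma vperm_append: "vperm (u @ v) = vperm u \<circ> vperm v"
  by (induct u) (auto simp: vperm_Cons)

lemma vperm_vinv: "vperm (vinv w) \<circ> vperm w = id"
proof (induct w)
  case (Cons x w)
  have "vperm (vinv (x # w)) \<circ> vperm (x # w) = vperm (vinv w) \<circ> (transp (gidx (fst x)) \<circ> transp (gidx (fst x))) \<circ> vperm w"
    by (simp add: vperm_append vperm_Cons comp_assoc)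
  also have "transp (gidx (fst x)) \<circ> transp (gidx (fst x)) = id" by (rule ext) simp
  finally show ?case using Cons by simp
qed simp

lemma sigma_inv: assumes "1 \<le> t" "Suc t \<le> n"
  shows "inv\<^bsub>SymF n\<^esub> (sigma_aut n t) = alpha_aut n t \<otimes>\<^bsub>SymF n\<^esub> eps_aut n (Suc t) t"
proof -
  have r: "rng n t" "rng n (Suc t)" using assms by (auto simp: rng_def)
  show ?thesis
    using assms r by (simp add: sigma_decomp SG.inv_mult_group epsinv_carrier alpha_carrier alpha_inv epsinv_inv)
qed



definition Sgen :: "nat \<Rightarrow> (fword \<Rightarrow> fword) set" where
  "Sgen n = {eps_aut n i j | i j. 1 \<le> i \<and> i \<le> n \<and> 1 \<le> j \<and> j \<le> n \<and> i \<noteq> j}"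

lemma Cb_gen: "Cb n = generate (SymF n) (Sgen n)"
  by (simp add: Cb_def Sgen_def)

lemma Sgen_carrier: "Sgen n \<subseteq> carrier (SymF n)"
  by (auto simp: Sgen_def rng_def intro!: eps_carrier)

lemma Cb_subgroup: "subgroup (Cb n) (SymF n)"
  unfolding Cb_gen by (rule SG.generate_is_subgroup[OF Sgen_carrier])

lemma Cb_carrier: "x \<in> Cb n \<Longrightarrow> x \<in> carrier (SymF n)"
  using subgroup.mem_carrier[OF Cb_subgroup] .

lemma Cb_mult: "x \<in> Cb n \<Longrightarrow> y \<in> Cb n \<Longrightarrow> x \<otimes>\<^bsub>SymF n\<^esub> y \<in> Cb n"
  using subgroup.m_closed[OF Cb_subgroup] .

lemma Cb_eps: "rng n i \<Longrightarrow> rng n j \<Longrightarrow> i \<noteq> j \<Longrightarrow> eps_aut n i j \<in> Cb n"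
  unfolding Cb_gen by (rule generate.incl) (auto simp: Sgen_def rng_def)

lemma Cb_epsinv: "rng n i \<Longrightarrow> rng n j \<Longrightarrow> i \<noteq> j \<Longrightarrow> Ei n i j \<in> Cb n"
  by (metis Cb_eps Cb_subgroup eps_inv subgroup.m_inv_closed)

lemma Cb_alpha_conj: assumes t: "1 \<le> t" "Suc t \<le> n" and x: "x \<in> Cb n"
  shows "alpha_aut n t \<otimes>\<^bsub>SymF n\<^esub> x \<otimes>\<^bsub>SymF n\<^esub> alpha_aut n t \<in> Cb n"
proof -
  have "alpha_aut n t \<otimes>\<^bsub>SymF n\<^esub> x \<otimes>\<^bsub>SymF n\<^esub> inv\<^bsub>SymF n\<^esub> (alpha_aut n t) \<in> generate (SymF n) (Sgen n)"
  proof (rule SG.conj_generate[OF alpha_carrier[OF t] Sgen_carrier])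
    fix s assume "s \<in> Sgen n"
    then obtain i j where s: "s = eps_aut n i j" "rng n i" "rng n j" "i \<noteq> j" by (auto simp: Sgen_def rng_def)
    have "alpha_aut n t \<otimes>\<^bsub>SymF n\<^esub> s \<otimes>\<^bsub>SymF n\<^esub> inv\<^bsub>SymF n\<^esub> (alpha_aut n t) = eps_aut n (transp t i) (transp t j)"
      using s t by (simp add: alpha_inv alpha_conj_eps)
    also have "\<dots> \<in> Cb n" using s t by (intro Cb_eps transp_rng) (auto simp: transp_inj)
    finally show "alpha_aut n t \<otimes>\<^bsub>SymF n\<^esub> s \<otimes>\<^bsub>SymF n\<^esub> inv\<^bsub>SymF n\<^esub> (alpha_aut n t) \<in> generate (SymF n) (Sgen n)"
      by (simp add: Cb_gen)
  qed (use x in \<open>simp add: Cb_gen\<close>)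
  then show ?thesis using t by (simp add: alpha_inv Cb_gen)
qed

definition Aperm :: "nat \<Rightarrow> (nat \<Rightarrow> nat) \<Rightarrow> fword \<Rightarrow> fword" where
  "Aperm n p = endo n (\<lambda>l. fgen (p l))"

lemma Aperm_step: assumes t: "1 \<le> t" "Suc t \<le> n" and p: "\<forall>l. rng n l \<longrightarrow> rng n (p l)"
  and c: "Aperm n p \<in> carrier (SymF n)"
  shows "alpha_aut n t \<otimes>\<^bsub>SymF n\<^esub> Aperm n p = Aperm n (transp t \<circ> p)"
proof -
  have g: "good n (\<lambda>l. fgen (p l))" using p by (auto simp: good_def rng_def)
  show ?thesis
    using endo_mult[OF g, of "alpha_map t"] alpha_carrier[OF t] c
    by (simp add: Aperm_def alpha_aut_def mcomp_def alpha_map_tr)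
qed

lemma group_step:
  assumes "G \<in> carrier (SymF n)" "c \<in> carrier (SymF n)" "a \<in> carrier (SymF n)" "A \<in> carrier (SymF n)"
    "a \<otimes>\<^bsub>SymF n\<^esub> a = \<one>\<^bsub>SymF n\<^esub>"
  shows "G \<otimes>\<^bsub>SymF n\<^esub> (c \<otimes>\<^bsub>SymF n\<^esub> A) = (G \<otimes>\<^bsub>SymF n\<^esub> c \<otimes>\<^bsub>SymF n\<^esub> a) \<otimes>\<^bsub>SymF n\<^esub> (a \<otimes>\<^bsub>SymF n\<^esub> A)"
  using assms by (simp add: SG.m_assoc flip: SG.m_assoc[where x=a and y=a and z=A])

lemma main1:
  assumes "vword_ok n w"
  shows "\<exists>c \<in> Cb n. phi n w = c \<otimes>\<^bsub>SymF n\<^esub> Aperm n (vperm w) \<and> Aperm n (vperm w) \<in> carrier (SymF n)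
     \<and> (\<forall>l. rng n l \<longrightarrow> rng n (vperm w l))"
  using assms
proof (induct w)
  case Nil
  have A1: "Aperm n id = \<one>\<^bsub>SymF n\<^esub>" by (simp add: Aperm_def endo_one[symmetric] fgen_def[abs_def])
  have "\<one>\<^bsub>SymF n\<^esub> \<in> Cb n" using subgroup.one_closed[OF Cb_subgroup] .
  moreover have "phi n [] = \<one>\<^bsub>SymF n\<^esub> \<otimes>\<^bsub>SymF n\<^esub> Aperm n (vperm [])" by (simp add: A1)
  moreover have A2: "Aperm n (\<lambda>a. a) = \<one>\<^bsub>SymF n\<^esub>" using A1 by (simp add: id_def)
  ultimately show ?case by (auto simp: A1 A2 intro!: bexI[of _ "\<one>\<^bsub>SymF n\<^esub>"])
next
  case (Cons x w)
  obtain g b where x: "x = (g, b)" by (cases x)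
  define t where "t = gidx g"
  have ok: "okg n g" "vword_ok n w" using Cons.prems x by auto
  have t: "1 \<le> t" "Suc t \<le> n" using okgD[OF ok(1)] by (auto simp: t_def)
  obtain c where c: "c \<in> Cb n" "phi n w = c \<otimes>\<^bsub>SymF n\<^esub> Aperm n (vperm w)"
    "Aperm n (vperm w) \<in> carrier (SymF n)" "\<forall>l. rng n l \<longrightarrow> rng n (vperm w l)"
    using Cons.hyps[OF ok(2)] by blast
  let ?a = "alpha_aut n t"
  let ?G = "gg n x"
  have aC: "?a \<in> carrier (SymF n)" using alpha_carrier[OF t] .
  have GC: "?G \<in> carrier (SymF n)" using gg_carrier ok x by simp
  have r: "rng n t" "rng n (Suc t)" using t by (auto simp: rng_def)
  have c': "?G \<otimes>\<^bsub>SymF n\<^esub> c \<otimes>\<^bsub>SymF n\<^esub> ?a \<in> Cb n"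
  proof (cases g)
    case (Rho t')
    then have "?G = ?a" using t by (auto simp: gg_def x t_def alpha_inv)
    then show ?thesis using Cb_alpha_conj[OF t c(1)] by simp
  next
    case (Sig t')
    show ?thesis
    proof (cases b)
      case False
      then have "?G = Ei n (Suc t) t \<otimes>\<^bsub>SymF n\<^esub> ?a" using t Sig by (simp add: gg_def x t_def sigma_decomp)
      then have "?G \<otimes>\<^bsub>SymF n\<^esub> c \<otimes>\<^bsub>SymF n\<^esub> ?a = Ei n (Suc t) t \<otimes>\<^bsub>SymF n\<^esub> (?a \<otimes>\<^bsub>SymF n\<^esub> c \<otimes>\<^bsub>SymF n\<^esub> ?a)"
        using aC Cb_carrier[OF c(1)] epsinv_carrier[OF r(2,1)] by (simp add: SG.m_assoc)
      then show ?thesis using Cb_mult Cb_epsinv[OF r(2,1)] Cb_alpha_conj[OF t c(1)] by simp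
    next
      case True
      then have "?G = ?a \<otimes>\<^bsub>SymF n\<^esub> eps_aut n (Suc t) t" using t Sig by (simp add: gg_def x t_def sigma_inv)
      then have "?G \<otimes>\<^bsub>SymF n\<^esub> c \<otimes>\<^bsub>SymF n\<^esub> ?a = ?a \<otimes>\<^bsub>SymF n\<^esub> (eps_aut n (Suc t) t \<otimes>\<^bsub>SymF n\<^esub> c) \<otimes>\<^bsub>SymF n\<^esub> ?a"
        using aC Cb_carrier[OF c(1)] eps_carrier[OF r(2,1)] by (simp add: SG.m_assoc)
      then show ?thesis using Cb_mult[OF Cb_eps[OF r(2,1)] c(1)] Cb_alpha_conj[OF t] by simp
    qed
  qed
  have vp: "vperm (x # w) = transp t \<circ> vperm w" by (simp add: vperm_Cons x t_def)
  have AP: "Aperm n (vperm (x # w)) = ?a \<otimes>\<^bsub>SymF n\<^esub> Aperm n (vperm w)"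
    using Aperm_step[OF t c(4) c(3)] vp by simp
  have "phi n (x # w) = ?G \<otimes>\<^bsub>SymF n\<^esub> (c \<otimes>\<^bsub>SymF n\<^esub> Aperm n (vperm w))"
    by (simp add: phi_Cons c(2))
  also have "\<dots> = (?G \<otimes>\<^bsub>SymF n\<^esub> c \<otimes>\<^bsub>SymF n\<^esub> ?a) \<otimes>\<^bsub>SymF n\<^esub> Aperm n (vperm (x # w))"
    unfolding AP by (rule group_step[OF GC Cb_carrier[OF c(1)] aC c(3) alpha_alpha[OF t]])
  finally have P: "phi n (x # w) = (?G \<otimes>\<^bsub>SymF n\<^esub> c \<otimes>\<^bsub>SymF n\<^esub> ?a) \<otimes>\<^bsub>SymF n\<^esub> Aperm n (vperm (x # w))" .
  have AC: "Aperm n (vperm (x # w)) \<in> carrier (SymF n)"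
    unfolding AP by (rule SG.m_closed[OF aC c(3)])
  have "\<forall>l. rng n l \<longrightarrow> rng n (vperm (x # w) l)" using vp c(4) transp_rng[OF t] by simp
  then show ?case using c' P AC by blast
qed

lemma VP_sub: "phi n ` VP_words n \<subseteq> Cb n"
proof
  fix y assume "y \<in> phi n ` VP_words n"
  then obtain w where w: "vword_ok n w" "vperm w = id" "y = phi n w" by (auto simp: VP_words_def)
  obtain c where "c \<in> Cb n" "phi n w = c \<otimes>\<^bsub>SymF n\<^esub> Aperm n id"
    using main1[OF w(1)] w(2) by auto
  moreover have "Aperm n id = \<one>\<^bsub>SymF n\<^esub>" by (simp add: Aperm_def endo_one[symmetric] fgen_def[abs_def])
  ultimately show "y \<in> Cb n" using w(3) Cb_carrier by auto
qed



lemma rhos_Suc: "k < l \<Longrightarrow> rhos k (Suc l) = rhos k l @ [(Rho l, False)]"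
  by (simp add: rhos_def)

lemma rhos_same: "rhos k (Suc k) = []"
  by (simp add: rhos_def)

lemma lam_Suc1: "k < l \<Longrightarrow> lam k (Suc l) = [(Rho l, False)] @ lam k l @ [(Rho l, False)]"
  by (simp add: lam_def rhos_Suc)

lemma lam_Suc2: "k < l \<Longrightarrow> lam (Suc l) k = [(Rho l, False)] @ lam l k @ [(Rho l, False)]"
  by (simp add: lam_def rhos_Suc)

lemma lam_base1: "lam k (Suc k) = [(Rho k, False), (Sig k, True)]"
  by (simp add: lam_def rhos_same)

lemma lam_base2: "lam (Suc k) k = [(Sig k, True), (Rho k, False)]"
  by (simp add: lam_def rhos_same)

lemma okg_Rho: "okg n (Rho l) \<longleftrightarrow> 1 \<le> l \<and> Suc l \<le> n"
  and okg_Sig: "okg n (Sig l) \<longleftrightarrow> 1 \<le> l \<and> Suc l \<le> n"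
  by (auto simp: okg_def)

lemma phi_rho_conj:
  assumes "1 \<le> l" "Suc l \<le> n" "vword_ok n u"
  shows "phi n ([(Rho l, False)] @ u @ [(Rho l, False)]) = alpha_aut n l \<otimes>\<^bsub>SymF n\<^esub> phi n u \<otimes>\<^bsub>SymF n\<^esub> alpha_aut n l"
proof -
  have o: "vword_ok n [(Rho l, False)]" using assms by (simp add: okg_Rho)
  have p: "phi n [(Rho l, False)] = alpha_aut n l" using assms by (simp add: phi_single okg_Rho gg_def)
  have "phi n ([(Rho l, False)] @ u @ [(Rho l, False)]) = phi n [(Rho l, False)] \<otimes>\<^bsub>SymF n\<^esub> phi n (u @ [(Rho l, False)])"
    by (rule phi_append) (use o assms in simp_all)
  also have "phi n (u @ [(Rho l, False)]) = phi n u \<otimes>\<^bsub>SymF n\<^esub> phi n [(Rho l, False)]"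
    by (rule phi_append) (use o assms in simp_all)
  finally show ?thesis using assms by (simp add: p SG.m_assoc alpha_carrier phi_carrier)
qed

lemma vperm_rho_conj: "vperm u = id \<Longrightarrow> vperm ([(Rho l, False)] @ u @ [(Rho l, False)]) = id"
  by (auto simp: vperm_append vperm_Cons)

lemma lam_props:
  assumes k: "1 \<le> k" "k < l" "l \<le> n"
  shows "vword_ok n (lam k l) \<and> vperm (lam k l) = id \<and> phi n (lam k l) = eps_aut n l k
       \<and> vword_ok n (lam l k) \<and> vperm (lam l k) = id \<and> phi n (lam l k) = eps_aut n k l"
proof -
  have "Suc k \<le> l" using k by simp
  then show ?thesis using k(3)
  proof (induct l rule: dec_induct)
    case base
    have t: "1 \<le> k" "Suc k \<le> n" using k base by auto
    have r: "rng n k" "rng n (Suc k)" using t by (auto simp: rng_def)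
    have ok1: "vword_ok n (lam k (Suc k))" "vword_ok n (lam (Suc k) k)"
      using t by (auto simp: lam_base1 lam_base2 okg_Rho okg_Sig)
    have vp: "vperm (lam k (Suc k)) = id" "vperm (lam (Suc k) k) = id"
      by (auto simp: lam_base1 lam_base2 vperm_Cons)
    have e1: "phi n (lam k (Suc k)) = eps_aut n (Suc k) k"
    proof -
      have "phi n (lam k (Suc k)) = alpha_aut n k \<otimes>\<^bsub>SymF n\<^esub> (alpha_aut n k \<otimes>\<^bsub>SymF n\<^esub> eps_aut n (Suc k) k)"
        using t r by (simp add: lam_base1 phi_Cons gg_def sigma_inv SG.m_closed alpha_carrier eps_carrier)
      also have "\<dots> = eps_aut n (Suc k) k"
        using t r by (simp add: alpha_alpha alpha_carrier eps_carrier flip: SG.m_assoc)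
      finally show ?thesis .
    qed
    have e2: "phi n (lam (Suc k) k) = eps_aut n k (Suc k)"
    proof -
      have "phi n (lam (Suc k) k) = alpha_aut n k \<otimes>\<^bsub>SymF n\<^esub> eps_aut n (Suc k) k \<otimes>\<^bsub>SymF n\<^esub> alpha_aut n k"
        using t r by (simp add: lam_base2 phi_Cons gg_def sigma_inv SG.m_closed alpha_carrier eps_carrier SG.m_assoc)
      also have "\<dots> = eps_aut n (transp k (Suc k)) (transp k k)"
        using t r by (simp add: alpha_conj_eps)
      also have "\<dots> = eps_aut n k (Suc k)" by (simp add: Defs.transp_def)
      finally show ?thesis .
    qed
    show ?case using ok1 vp e1 e2 by simp
  next
    case (step l)
    have t: "1 \<le> l" "Suc l \<le> n" using step k by auto
    have kl: "k < l" using step by simp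
    have r: "rng n k" "rng n l" using t kl k by (auto simp: rng_def)
    have IH: "vword_ok n (lam k l) \<and> vperm (lam k l) = id \<and> phi n (lam k l) = eps_aut n l k
       \<and> vword_ok n (lam l k) \<and> vperm (lam l k) = id \<and> phi n (lam l k) = eps_aut n k l"
      using step by (simp add: id_def)
    have tk: "transp l k = k" "transp l l = Suc l" using kl by (auto simp: Defs.transp_def)
    have "phi n (lam k (Suc l)) = alpha_aut n l \<otimes>\<^bsub>SymF n\<^esub> phi n (lam k l) \<otimes>\<^bsub>SymF n\<^esub> alpha_aut n l"
      unfolding lam_Suc1[OF kl] by (rule phi_rho_conj) (use t IH in auto)
    also have "\<dots> = eps_aut n (transp l l) (transp l k)"
      using IH t r kl by (simp add: alpha_conj_eps)
    finally have P1: "phi n (lam k (Suc l)) = eps_aut n (Suc l) k" by (simp add: tk)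
    have "phi n (lam (Suc l) k) = alpha_aut n l \<otimes>\<^bsub>SymF n\<^esub> phi n (lam l k) \<otimes>\<^bsub>SymF n\<^esub> alpha_aut n l"
      unfolding lam_Suc2[OF kl] by (rule phi_rho_conj) (use t IH in auto)
    also have "\<dots> = eps_aut n (transp l k) (transp l l)"
      using IH t r kl by (simp add: alpha_conj_eps)
    finally have P2: "phi n (lam (Suc l) k) = eps_aut n k (Suc l)" by (simp add: tk)
    have "vword_ok n (lam k (Suc l))" "vword_ok n (lam (Suc l) k)"
      using IH t kl by (auto simp: lam_Suc1 lam_Suc2 okg_Rho)
    moreover have "vperm (lam k (Suc l)) = id"
      unfolding lam_Suc1[OF kl] by (rule vperm_rho_conj) (use IH in blast)
    moreover have "vperm (lam (Suc l) k) = id"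
      unfolding lam_Suc2[OF kl] by (rule vperm_rho_conj) (use IH in blast)
    ultimately show ?case using P1 P2 by simp
  qed
qed

lemma lam_eps: assumes "rng n a" "rng n b" "a \<noteq> b"
  shows "vword_ok n (lam b a) \<and> vperm (lam b a) = id \<and> phi n (lam b a) = eps_aut n a b"
proof (cases "a < b")
  case True then show ?thesis using lam_props[of a b n] assms by (auto simp: rng_def)
next
  case False then show ?thesis using lam_props[of b a n] assms by (auto simp: rng_def)
qed

lemma VP_sup: "Cb n \<subseteq> phi n ` VP_words n"
proof
  fix y assume "y \<in> Cb n"
  then show "y \<in> phi n ` VP_words n" unfolding Cb_gen
  proof (induct y rule: generate.induct)
    case one
    have "[] \<in> VP_words n" by (simp add: VP_words_def)
    then show ?case by (metis image_eqI phi_Nil)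
  next
    case (incl h)
    then obtain a b where h: "h = eps_aut n a b" "rng n a" "rng n b" "a \<noteq> b" by (auto simp: Sgen_def rng_def)
    then have "lam b a \<in> VP_words n" "phi n (lam b a) = h" using lam_eps[OF h(2-4)] by (auto simp: VP_words_def)
    then show ?case by (metis image_eqI)
  next
    case (inv h)
    then obtain a b where h: "h = eps_aut n a b" "rng n a" "rng n b" "a \<noteq> b" by (auto simp: Sgen_def rng_def)
    have L: "vword_ok n (lam b a)" "vperm (lam b a) = id" "phi n (lam b a) = h" using lam_eps[OF h(2-4)] h by auto
    have "vperm (vinv (lam b a)) = id" using vperm_vinv[of "lam b a"] L(2) by simp
    then have "vinv (lam b a) \<in> VP_words n" "phi n (vinv (lam b a)) = inv\<^bsub>SymF n\<^esub> h"
      using L by (auto simp: VP_words_def phi_vinv)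
    then show ?case by (metis image_eqI)
  next
    case (eng h1 h2)
    then obtain u v where uv: "u \<in> VP_words n" "v \<in> VP_words n" "h1 = phi n u" "h2 = phi n v" by blast
    then have "u @ v \<in> VP_words n" "phi n (u @ v) = h1 \<otimes>\<^bsub>SymF n\<^esub> h2"
      by (auto simp: VP_words_def vperm_append phi_append)
    then show ?case by (metis image_eqI)
  qed
qed

lemma part1: "phi n ` VP_words n = Cb n"
  using VP_sub VP_sup by blast



lemma endo_mcomp_carrier:
  "good n f \<Longrightarrow> good n g \<Longrightarrow> endo n f \<in> carrier (SymF n) \<Longrightarrow> endo n g \<in> carrier (SymF n)
   \<Longrightarrow> endo n (mcomp f g) \<in> carrier (SymF n)"
  by (metis endo_mult SG.m_closed)

lemma eps_carrier': "rng n i \<Longrightarrow> rng n j \<Longrightarrow> i \<noteq> j \<Longrightarrow> endo n (eps_map i j) \<in> carrier (SymF n)"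
  using eps_carrier by (simp add: eps_aut_def)

lemmas prod_simps = endo_mult good_mcomp endo_mcomp_carrier good_eps good_epsinv eps_carrier' epsinv_carrier

abbreviation "Ee n i j \<equiv> endo n (eps_map i j)"


lemma cA0: assumes "rng n a" "rng n b" "rng n m" "a \<noteq> b" "a \<noteq> m" "b \<noteq> m"
  shows "Ee n a b \<otimes>\<^bsub>SymF n\<^esub> (Ee n m a \<otimes>\<^bsub>SymF n\<^esub> Ei n a b) = Ei n m b \<otimes>\<^bsub>SymF n\<^esub> (Ee n m a \<otimes>\<^bsub>SymF n\<^esub> (Ee n m b))"
  using assms(1-3) assms(4-6) assms(4-6)[symmetric]
  apply (simp only: prod_simps not_False_eq_True)
  apply (rule endo_cong)
  apply (simp add: mcomp_def eps_map_def epsinv_map_def fgen_def fl_def reduce_Cons)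
  done

lemma cB0: assumes "rng n a" "rng n b" "rng n m" "a \<noteq> b" "a \<noteq> m" "b \<noteq> m"
  shows "Ee n a b \<otimes>\<^bsub>SymF n\<^esub> (Ee n a m \<otimes>\<^bsub>SymF n\<^esub> Ei n a b) = Ei n m b \<otimes>\<^bsub>SymF n\<^esub> (Ee n a m \<otimes>\<^bsub>SymF n\<^esub> (Ee n m b))"
  using assms(1-3) assms(4-6) assms(4-6)[symmetric]
  apply (simp only: prod_simps not_False_eq_True)
  apply (rule endo_cong)
  apply (simp add: mcomp_def eps_map_def epsinv_map_def fgen_def fl_def reduce_Cons)
  done

lemma cC0: assumes "rng n a" "rng n b" "rng n m" "a \<noteq> b" "a \<noteq> m" "b \<noteq> m"
  shows "Ee n a b \<otimes>\<^bsub>SymF n\<^esub> (Ee n b m \<otimes>\<^bsub>SymF n\<^esub> Ei n a b) = Ee n a m \<otimes>\<^bsub>SymF n\<^esub> (Ee n b m \<otimes>\<^bsub>SymF n\<^esub> (Ei n m b \<otimes>\<^bsub>SymF n\<^esub> (Ei n a m \<otimes>\<^bsub>SymF n\<^esub> (Ee n m b))))"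
  using assms(1-3) assms(4-6) assms(4-6)[symmetric]
  apply (simp only: prod_simps not_False_eq_True)
  apply (rule endo_cong)
  apply (simp add: mcomp_def eps_map_def epsinv_map_def fgen_def fl_def reduce_Cons)
  done

lemma cD0: assumes "rng n a" "rng n b" "rng n m" "a \<noteq> b" "a \<noteq> m" "b \<noteq> m"
  shows "Ee n a b \<otimes>\<^bsub>SymF n\<^esub> (Ee n m b \<otimes>\<^bsub>SymF n\<^esub> Ei n a b) = Ee n m b"
  using assms(1-3) assms(4-6) assms(4-6)[symmetric]
  apply (simp only: prod_simps not_False_eq_True)
  apply (rule endo_cong)
  apply (simp add: mcomp_def eps_map_def epsinv_map_def fgen_def fl_def reduce_Cons)
  done

lemma cE0: assumes "rng n a" "rng n b" "rng n m" "rng n k" "a \<noteq> b" "a \<noteq> m" "b \<noteq> m" "k \<noteq> a" "k \<noteq> b" "k \<noteq> m"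
  shows "Ee n a b \<otimes>\<^bsub>SymF n\<^esub> (Ee n m k \<otimes>\<^bsub>SymF n\<^esub> Ei n a b) = Ee n m k"
  using assms(1-4) assms(5-10) assms(5-10)[symmetric]
  apply (simp only: prod_simps not_False_eq_True)
  apply (rule endo_cong)
  apply (simp add: mcomp_def eps_map_def epsinv_map_def fgen_def fl_def reduce_Cons)
  done

lemma cF0: assumes "rng n a" "rng n b" "rng n m" "rng n k" "a \<noteq> b" "a \<noteq> m" "b \<noteq> m" "k \<noteq> a" "k \<noteq> b" "k \<noteq> m"
  shows "Ee n a b \<otimes>\<^bsub>SymF n\<^esub> (Ee n k m \<otimes>\<^bsub>SymF n\<^esub> Ei n a b) = Ee n k m"
  using assms(1-4) assms(5-10) assms(5-10)[symmetric]
  apply (simp only: prod_simps not_False_eq_True)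
  apply (rule endo_cong)
  apply (simp add: mcomp_def eps_map_def epsinv_map_def fgen_def fl_def reduce_Cons)
  done

lemma cA1: assumes "rng n a" "rng n b" "rng n m" "a \<noteq> b" "a \<noteq> m" "b \<noteq> m"
  shows "Ei n a b \<otimes>\<^bsub>SymF n\<^esub> (Ee n m a \<otimes>\<^bsub>SymF n\<^esub> Ee n a b) = Ee n m b \<otimes>\<^bsub>SymF n\<^esub> (Ee n m a \<otimes>\<^bsub>SymF n\<^esub> (Ei n m b))"
  using assms(1-3) assms(4-6) assms(4-6)[symmetric]
  apply (simp only: prod_simps not_False_eq_True)
  apply (rule endo_cong)
  apply (simp add: mcomp_def eps_map_def epsinv_map_def fgen_def fl_def reduce_Cons)
  done

lemma cB1: assumes "rng n a" "rng n b" "rng n m" "a \<noteq> b" "a \<noteq> m" "b \<noteq> m"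
  shows "Ei n a b \<otimes>\<^bsub>SymF n\<^esub> (Ee n a m \<otimes>\<^bsub>SymF n\<^esub> Ee n a b) = Ee n m b \<otimes>\<^bsub>SymF n\<^esub> (Ee n a m \<otimes>\<^bsub>SymF n\<^esub> (Ei n m b))"
  using assms(1-3) assms(4-6) assms(4-6)[symmetric]
  apply (simp only: prod_simps not_False_eq_True)
  apply (rule endo_cong)
  apply (simp add: mcomp_def eps_map_def epsinv_map_def fgen_def fl_def reduce_Cons)
  done

lemma cC1: assumes "rng n a" "rng n b" "rng n m" "a \<noteq> b" "a \<noteq> m" "b \<noteq> m"
  shows "Ei n a b \<otimes>\<^bsub>SymF n\<^esub> (Ee n b m \<otimes>\<^bsub>SymF n\<^esub> Ee n a b) = Ee n a m \<otimes>\<^bsub>SymF n\<^esub> (Ee n b m \<otimes>\<^bsub>SymF n\<^esub> (Ee n m b \<otimes>\<^bsub>SymF n\<^esub> (Ei n a m \<otimes>\<^bsub>SymF n\<^esub> (Ei n m b))))"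
  using assms(1-3) assms(4-6) assms(4-6)[symmetric]
  apply (simp only: prod_simps not_False_eq_True)
  apply (rule endo_cong)
  apply (simp add: mcomp_def eps_map_def epsinv_map_def fgen_def fl_def reduce_Cons)
  done

lemma cD1: assumes "rng n a" "rng n b" "rng n m" "a \<noteq> b" "a \<noteq> m" "b \<noteq> m"
  shows "Ei n a b \<otimes>\<^bsub>SymF n\<^esub> (Ee n m b \<otimes>\<^bsub>SymF n\<^esub> Ee n a b) = Ee n m b"
  using assms(1-3) assms(4-6) assms(4-6)[symmetric]
  apply (simp only: prod_simps not_False_eq_True)
  apply (rule endo_cong)
  apply (simp add: mcomp_def eps_map_def epsinv_map_def fgen_def fl_def reduce_Cons)
  done

lemma cE1: assumes "rng n a" "rng n b" "rng n m" "rng n k" "a \<noteq> b" "a \<noteq> m" "b \<noteq> m" "k \<noteq> a" "k \<noteq> b" "k \<noteq> m"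
  shows "Ei n a b \<otimes>\<^bsub>SymF n\<^esub> (Ee n m k \<otimes>\<^bsub>SymF n\<^esub> Ee n a b) = Ee n m k"
  using assms(1-4) assms(5-10) assms(5-10)[symmetric]
  apply (simp only: prod_simps not_False_eq_True)
  apply (rule endo_cong)
  apply (simp add: mcomp_def eps_map_def epsinv_map_def fgen_def fl_def reduce_Cons)
  done

lemma cF1: assumes "rng n a" "rng n b" "rng n m" "rng n k" "a \<noteq> b" "a \<noteq> m" "b \<noteq> m" "k \<noteq> a" "k \<noteq> b" "k \<noteq> m"
  shows "Ei n a b \<otimes>\<^bsub>SymF n\<^esub> (Ee n k m \<otimes>\<^bsub>SymF n\<^esub> Ee n a b) = Ee n k m"
  using assms(1-4) assms(5-10) assms(5-10)[symmetric]
  apply (simp only: prod_simps not_False_eq_True)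
  apply (rule endo_cong)
  apply (simp add: mcomp_def eps_map_def epsinv_map_def fgen_def fl_def reduce_Cons)
  done



definition Dgen :: "nat \<Rightarrow> nat \<Rightarrow> (fword \<Rightarrow> fword) set" where
  "Dgen n i = {Ee n (Suc i) k | k. 1 \<le> k \<and> k \<le> i} \<union> {Ee n k (Suc i) | k. 1 \<le> k \<and> k \<le> i}"

lemma D_gen: "D n i = generate (SymF n) (Dgen n i)"
  by (simp add: D_def Dgen_def eps_aut_def)

context
  fixes n i :: nat
  assumes i: "1 \<le> i" "Suc i \<le> n"
begin

lemma Dgen_carrier: "Dgen n i \<subseteq> carrier (SymF n)"
  using i by (auto simp: Dgen_def rng_def intro!: eps_carrier')

lemma D_subgroup: "subgroup (D n i) (SymF n)"
  unfolding D_gen by (rule SG.generate_is_subgroup[OF Dgen_carrier])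

lemma D_mult: "x \<in> D n i \<Longrightarrow> y \<in> D n i \<Longrightarrow> x \<otimes>\<^bsub>SymF n\<^esub> y \<in> D n i"
  using subgroup.m_closed[OF D_subgroup] .

lemma D_inv: "x \<in> D n i \<Longrightarrow> inv\<^bsub>SymF n\<^esub> x \<in> D n i"
  using subgroup.m_inv_closed[OF D_subgroup] .

lemma D_carrier: "x \<in> D n i \<Longrightarrow> x \<in> carrier (SymF n)"
  using subgroup.mem_carrier[OF D_subgroup] .

lemma D_E1: "1 \<le> k \<Longrightarrow> k \<le> i \<Longrightarrow> Ee n (Suc i) k \<in> D n i"
  unfolding D_gen by (rule generate.incl) (auto simp: Dgen_def)

lemma D_E2: "1 \<le> k \<Longrightarrow> k \<le> i \<Longrightarrow> Ee n k (Suc i) \<in> D n i"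
  unfolding D_gen by (rule generate.incl) (auto simp: Dgen_def)

lemma D_I1: "1 \<le> k \<Longrightarrow> k \<le> i \<Longrightarrow> Ei n (Suc i) k \<in> D n i"
  using D_inv[OF D_E1, of k] i eps_inv[of n "Suc i" k] by (simp add: eps_aut_def rng_def)

lemma D_I2: "1 \<le> k \<Longrightarrow> k \<le> i \<Longrightarrow> Ei n k (Suc i) \<in> D n i"
  using D_inv[OF D_E2, of k] i eps_inv[of n k "Suc i"] by (simp add: eps_aut_def rng_def)

lemmas D_intros = D_mult D_E1 D_E2 D_I1 D_I2

lemma conj_gen_D:
  assumes ab: "1 \<le> a" "a \<le> Suc i" "1 \<le> b" "b \<le> Suc i" "a \<noteq> b"
    and cc: "(c = Ee n a b \<and> ci = Ei n a b) \<or> (c = Ei n a b \<and> ci = Ee n a b)"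
    and s: "s \<in> Dgen n i"
  shows "c \<otimes>\<^bsub>SymF n\<^esub> (s \<otimes>\<^bsub>SymF n\<^esub> ci) \<in> D n i"
proof (cases "a = Suc i \<or> b = Suc i")
  case True
  have "c \<in> D n i \<and> ci \<in> D n i" using True cc ab D_E1 D_E2 D_I1 D_I2 by auto
  moreover have "s \<in> D n i" using s unfolding D_gen by (rule generate.incl)
  ultimately show ?thesis by (simp add: D_mult)
next
  case False
  let ?m = "Suc i"
  have abi: "a \<le> i" "b \<le> i" using False ab by auto
  have r: "rng n a" "rng n b" "rng n ?m" using ab abi i by (auto simp: rng_def)
  have d: "a \<noteq> ?m" "b \<noteq> ?m" using abi by auto
  obtain k where k: "1 \<le> k" "k \<le> i" "s = Ee n ?m k \<or> s = Ee n k ?m" using s by (auto simp: Dgen_def)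
  have rk: "rng n k" "k \<noteq> ?m" using k i by (auto simp: rng_def)
  note L = cA0[OF r ab(5) d] cB0[OF r ab(5) d] cC0[OF r ab(5) d] cD0[OF r ab(5) d]
     cA1[OF r ab(5) d] cB1[OF r ab(5) d] cC1[OF r ab(5) d] cD1[OF r ab(5) d]
  show ?thesis
  proof (cases "k = a")
    case True
    show ?thesis using cc k(3)
      apply (elim disjE conjE)
      apply (simp_all only: True L)
      using k abi ab apply (auto intro!: D_intros)
      done
  next
    case ka: False
    show ?thesis
    proof (cases "k = b")
      case True
      show ?thesis using cc k(3)
        apply (elim disjE conjE)
        apply (simp_all only: True L)
        using k abi ab apply (auto intro!: D_intros)
        done
    next
      case kb: False
      note L2 = cE0[OF r rk(1) ab(5) d ka kb rk(2)] cF0[OF r rk(1) ab(5) d ka kb rk(2)]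
        cE1[OF r rk(1) ab(5) d ka kb rk(2)] cF1[OF r rk(1) ab(5) d ka kb rk(2)]
      show ?thesis using cc k(3)
        apply (elim disjE conjE)
        apply (simp_all only: L2)
        using k apply (auto intro!: D_intros)
        done
    qed
  qed
qed

definition Hgen :: "(fword \<Rightarrow> fword) set" where
  "Hgen = {Ee n a b | a b. 1 \<le> a \<and> a \<le> Suc i \<and> 1 \<le> b \<and> b \<le> Suc i \<and> a \<noteq> b}"

lemma Hgen_carrier: "Hgen \<subseteq> carrier (SymF n)"
  using i by (auto simp: Hgen_def rng_def intro!: eps_carrier')

lemma H_norm:
  assumes c: "c \<in> generate (SymF n) Hgen" and d: "d \<in> D n i"
  shows "c \<otimes>\<^bsub>SymF n\<^esub> d \<otimes>\<^bsub>SymF n\<^esub> inv\<^bsub>SymF n\<^esub> c \<in> D n i"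
  using c d
proof (induct c arbitrary: d rule: generate.induct)
  case one
  then show ?case using D_carrier by simp
next
  case (incl h)
  then obtain a b where h: "h = Ee n a b" "1 \<le> a" "a \<le> Suc i" "1 \<le> b" "b \<le> Suc i" "a \<noteq> b"
    by (auto simp: Hgen_def)
  have r: "rng n a" "rng n b" using h i by (auto simp: rng_def)
  have hi: "inv\<^bsub>SymF n\<^esub> h = Ei n a b" using eps_inv[OF r h(6)] h by (simp add: eps_aut_def)
  have hc: "h \<in> carrier (SymF n)" using h r by (simp add: eps_carrier')
  show ?case unfolding D_gen
  proof (rule SG.conj_generate[OF hc Dgen_carrier])
    fix s assume s: "s \<in> Dgen n i"
    have sc: "s \<in> carrier (SymF n)" using s Dgen_carrier by auto
    have "h \<otimes>\<^bsub>SymF n\<^esub> (s \<otimes>\<^bsub>SymF n\<^esub> Ei n a b) \<in> D n i"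
      by (rule conj_gen_D[OF h(2-6) _ s]) (simp add: h)
    then show "h \<otimes>\<^bsub>SymF n\<^esub> s \<otimes>\<^bsub>SymF n\<^esub> inv\<^bsub>SymF n\<^esub> h \<in> generate (SymF n) (Dgen n i)"
      using hc sc epsinv_carrier[OF r h(6)] by (simp add: hi SG.m_assoc D_gen)
  qed (use incl in \<open>simp add: D_gen\<close>)
next
  case (inv h)
  then obtain a b where h: "h = Ee n a b" "1 \<le> a" "a \<le> Suc i" "1 \<le> b" "b \<le> Suc i" "a \<noteq> b"
    by (auto simp: Hgen_def)
  have r: "rng n a" "rng n b" using h i by (auto simp: rng_def)
  have hi: "inv\<^bsub>SymF n\<^esub> h = Ei n a b" using eps_inv[OF r h(6)] h by (simp add: eps_aut_def)
  have hii: "inv\<^bsub>SymF n\<^esub> (Ei n a b) = Ee n a b" using epsinv_inv[OF r h(6)] by (simp add: eps_aut_def)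
  have hc: "Ei n a b \<in> carrier (SymF n)" using r h by (simp add: epsinv_carrier)
  have "Ei n a b \<otimes>\<^bsub>SymF n\<^esub> d \<otimes>\<^bsub>SymF n\<^esub> inv\<^bsub>SymF n\<^esub> (Ei n a b) \<in> D n i" unfolding D_gen
  proof (rule SG.conj_generate[OF hc Dgen_carrier])
    fix s assume s: "s \<in> Dgen n i"
    have sc: "s \<in> carrier (SymF n)" using s Dgen_carrier by auto
    have "Ei n a b \<otimes>\<^bsub>SymF n\<^esub> (s \<otimes>\<^bsub>SymF n\<^esub> Ee n a b) \<in> D n i"
      by (rule conj_gen_D[OF h(2-6) _ s]) simp
    then show "Ei n a b \<otimes>\<^bsub>SymF n\<^esub> s \<otimes>\<^bsub>SymF n\<^esub> inv\<^bsub>SymF n\<^esub> (Ei n a b) \<in> generate (SymF n) (Dgen n i)"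
      using hc sc eps_carrier'[OF r h(6)] by (simp add: hii SG.m_assoc D_gen)
  qed (use inv in \<open>simp add: D_gen\<close>)
  then show ?case by (simp add: hi)
next
  case (eng h1 h2)
  have c: "h1 \<in> carrier (SymF n)" "h2 \<in> carrier (SymF n)"
    using eng SG.generate_in_carrier[OF Hgen_carrier] by auto
  have dc: "d \<in> carrier (SymF n)" using eng D_carrier by auto
  have "h2 \<otimes>\<^bsub>SymF n\<^esub> d \<otimes>\<^bsub>SymF n\<^esub> inv\<^bsub>SymF n\<^esub> h2 \<in> D n i" using eng by blast
  then have "h1 \<otimes>\<^bsub>SymF n\<^esub> (h2 \<otimes>\<^bsub>SymF n\<^esub> d \<otimes>\<^bsub>SymF n\<^esub> inv\<^bsub>SymF n\<^esub> h2) \<otimes>\<^bsub>SymF n\<^esub> inv\<^bsub>SymF n\<^esub> h1 \<in> D n i"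
    using eng by blast
  then show ?case using c dc by (simp add: SG.m_assoc SG.inv_mult_group)
qed

end



lemma H_words_prop:
  assumes "h \<in> H_words i" "1 \<le> i" "Suc i \<le> n"
  shows "vword_ok n h \<and> phi n h \<in> generate (SymF n) (Hgen n i)"
  using assms
proof (induct h rule: H_words.induct)
  case H_nil
  then show ?case by (simp add: generate.one)
next
  case (H_gen k l u)
  have r: "rng n l" "rng n k" "l \<noteq> k" using H_gen by (auto simp: rng_def)
  have L: "vword_ok n (lam k l)" "phi n (lam k l) = Ee n l k"
    using lam_eps[OF r] by (auto simp: eps_aut_def)
  have "Ee n l k \<in> Hgen n i" using H_gen by (auto simp: Hgen_def)
  then have "Ee n l k \<in> generate (SymF n) (Hgen n i)" by (rule generate.incl)
  then show ?case using H_gen L by (simp add: phi_append generate.eng)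
next
  case (H_gen_inv k l u)
  have r: "rng n l" "rng n k" "l \<noteq> k" using H_gen_inv by (auto simp: rng_def)
  have L: "vword_ok n (lam k l)" "phi n (lam k l) = Ee n l k"
    using lam_eps[OF r] by (auto simp: eps_aut_def)
  have "Ee n l k \<in> Hgen n i" using H_gen_inv by (auto simp: Hgen_def)
  then have "inv\<^bsub>SymF n\<^esub> (Ee n l k) \<in> generate (SymF n) (Hgen n i)" by (rule generate.inv)
  then show ?case using H_gen_inv L by (simp add: phi_append phi_vinv generate.eng)
qed

lemma Vgen_prop:
  assumes "v \<in> V_gens i" "1 \<le> i" "Suc i \<le> n"
  shows "vword_ok n v \<and> phi n v \<in> D n i"
proof -
  obtain k where k: "1 \<le> k" "k \<le> i" "v = lam k (Suc i) \<or> v = lam (Suc i) k"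
    using assms(1) by (auto simp: V_gens_def)
  have r: "rng n k" "rng n (Suc i)" "k \<noteq> Suc i" using k assms by (auto simp: rng_def)
  show ?thesis
  proof (cases "v = lam k (Suc i)")
    case True
    then show ?thesis using lam_eps[OF r(2,1) r(3)[symmetric]] D_E1[OF assms(2,3) k(1,2)] by (simp add: eps_aut_def)
  next
    case False
    then have "v = lam (Suc i) k" using k by simp
    then show ?thesis using lam_eps[OF r] D_E2[OF assms(2,3) k(1,2)] by (simp add: eps_aut_def)
  qed
qed

lemma Vstar_prop:
  assumes "w \<in> Vstar_words i" "1 \<le> i" "Suc i \<le> n"
  shows "vword_ok n w \<and> phi n w \<in> D n i"
  using assms
proof (induct w rule: Vstar_words.induct)
  case Vs_nil
  then show ?case by (simp add: D_gen generate.one)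
next
  case (Vs_conj v h u)
  have V: "vword_ok n v" "phi n v \<in> D n i" using Vgen_prop Vs_conj by auto
  have H: "vword_ok n h" "phi n h \<in> generate (SymF n) (Hgen n i)" using H_words_prop Vs_conj by auto
  have U: "vword_ok n u" "phi n u \<in> D n i" using Vs_conj by auto
  have hc: "phi n h \<in> carrier (SymF n)" using phi_carrier H(1) .
  have "phi n ((h @ v @ vinv h) @ u) = (phi n h \<otimes>\<^bsub>SymF n\<^esub> phi n v \<otimes>\<^bsub>SymF n\<^esub> inv\<^bsub>SymF n\<^esub> phi n h) \<otimes>\<^bsub>SymF n\<^esub> phi n u"
    using V H U by (simp add: phi_append phi_vinv phi_carrier SG.m_assoc)
  also have "\<dots> \<in> D n i" using H_norm[OF Vs_conj.prems H(2) V(2)] U(2) D_mult[OF Vs_conj.prems] by blast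
  finally show ?case using V H U by simp
next
  case (Vs_conj_inv v h u)
  have V: "vword_ok n v" "phi n v \<in> D n i" using Vgen_prop Vs_conj_inv by auto
  have V': "phi n (vinv v) \<in> D n i" using V D_inv[OF Vs_conj_inv.prems] by (simp add: phi_vinv)
  have H: "vword_ok n h" "phi n h \<in> generate (SymF n) (Hgen n i)" using H_words_prop Vs_conj_inv by auto
  have U: "vword_ok n u" "phi n u \<in> D n i" using Vs_conj_inv by auto
  have "phi n ((h @ vinv v @ vinv h) @ u) = (phi n h \<otimes>\<^bsub>SymF n\<^esub> phi n (vinv v) \<otimes>\<^bsub>SymF n\<^esub> inv\<^bsub>SymF n\<^esub> phi n h) \<otimes>\<^bsub>SymF n\<^esub> phi n u"
    using V H U by (simp add: phi_append phi_vinv phi_carrier SG.m_assoc)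
  also have "\<dots> \<in> D n i" using H_norm[OF Vs_conj_inv.prems H(2) V'] U(2) D_mult[OF Vs_conj_inv.prems] by blast
  finally show ?case using V H U by simp
qed

lemma Vstar_append: "u \<in> Vstar_words i \<Longrightarrow> w \<in> Vstar_words i \<Longrightarrow> u @ w \<in> Vstar_words i"
proof (induct u rule: Vstar_words.induct)
  case Vs_nil then show ?case by simp
next
  case (Vs_conj v h u)
  then show ?case using Vstar_words.Vs_conj[of v i h "u @ w"] by simp
next
  case (Vs_conj_inv v h u)
  then show ?case using Vstar_words.Vs_conj_inv[of v i h "u @ w"] by simp
qed

lemma part2:
  assumes i: "1 \<le> i" "Suc i \<le> n"
  shows "phi n ` Vstar_words i = D n i"
proof
  show "phi n ` Vstar_words i \<subseteq> D n i" using Vstar_prop[OF _ i] by auto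
next
  show "D n i \<subseteq> phi n ` Vstar_words i"
  proof
    fix y assume "y \<in> D n i"
    then show "y \<in> phi n ` Vstar_words i" unfolding D_gen
    proof (induct y rule: generate.induct)
      case one
      have "[] \<in> Vstar_words i" by (rule Vs_nil)
      then show ?case by (metis image_eqI phi_Nil)
    next
      case (incl s)
      then obtain k where k: "1 \<le> k" "k \<le> i" "s = Ee n (Suc i) k \<or> s = Ee n k (Suc i)"
        by (auto simp: Dgen_def)
      have r: "rng n k" "rng n (Suc i)" "k \<noteq> Suc i" using k i by (auto simp: rng_def)
      obtain v where v: "v \<in> V_gens i" "phi n v = s"
      proof (cases "s = Ee n (Suc i) k")
        case True
        then show ?thesis using that[of "lam k (Suc i)"] lam_eps[OF r(2,1) r(3)[symmetric]] k
          by (auto simp: V_gens_def eps_aut_def)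
      next
        case False
        then show ?thesis using that[of "lam (Suc i) k"] lam_eps[OF r] k
          by (auto simp: V_gens_def eps_aut_def)
      qed
      have "([] @ v @ vinv []) @ [] \<in> Vstar_words i"
        by (rule Vs_conj[OF v(1) H_nil Vs_nil])
      then have "v \<in> Vstar_words i" by simp
      then show ?case using v(2) by (metis image_eqI)
    next
      case (inv s)
      then obtain k where k: "1 \<le> k" "k \<le> i" "s = Ee n (Suc i) k \<or> s = Ee n k (Suc i)"
        by (auto simp: Dgen_def)
      have r: "rng n k" "rng n (Suc i)" "k \<noteq> Suc i" using k i by (auto simp: rng_def)
      obtain v where v: "v \<in> V_gens i" "phi n v = s"
      proof (cases "s = Ee n (Suc i) k")
        case True
        then show ?thesis using that[of "lam k (Suc i)"] lam_eps[OF r(2,1) r(3)[symmetric]] k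
          by (auto simp: V_gens_def eps_aut_def)
      next
        case False
        then show ?thesis using that[of "lam (Suc i) k"] lam_eps[OF r] k
          by (auto simp: V_gens_def eps_aut_def)
      qed
      have ok: "vword_ok n v" using Vgen_prop[OF v(1) i] by simp
      have "([] @ vinv v @ vinv []) @ [] \<in> Vstar_words i"
        by (rule Vs_conj_inv[OF v(1) H_nil Vs_nil])
      then have "vinv v \<in> Vstar_words i" by simp
      moreover have "phi n (vinv v) = inv\<^bsub>SymF n\<^esub> s" using ok v(2) by (simp add: phi_vinv)
      ultimately show ?case by (metis image_eqI)
    next
      case (eng h1 h2)
      then obtain u w where uw: "u \<in> Vstar_words i" "w \<in> Vstar_words i" "h1 = phi n u" "h2 = phi n w" by blast
      have ok: "vword_ok n u" "vword_ok n w" using Vstar_prop[OF _ i] uw by auto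
      have "u @ w \<in> Vstar_words i" using Vstar_append uw by blast
      moreover have "phi n (u @ w) = h1 \<otimes>\<^bsub>SymF n\<^esub> h2" using ok uw by (simp add: phi_append)
      ultimately show ?case by (metis image_eqI)
    qed
  qed
qed

theorem corollary3:
  fixes n :: nat
  shows "phi n ` VP_words n = Cb n
         \<and> (\<forall>i. 1 \<le> i \<and> i \<le> n - 1 \<longrightarrow> phi n ` Vstar_words i = D n i)"
proof (intro conjI allI impI)
  show "phi n ` VP_words n = Cb n" by (rule part1)
next
  fix i assume "1 \<le> i \<and> i \<le> n - 1"
  then have "1 \<le> i" "Suc i \<le> n" by auto
  then show "phi n ` Vstar_words i = D n i" by (rule part2)
qed


end
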